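(* Let $\mathcal A=(a_{ij})_{0\le i,j\le2}$ and $\mathcal B=(b_{ij})_{0\le i,j\le 2}$ be symmetric $3\times3$ matrices whose 12 independent entries $a_{ij},b_{ij}$ ($i\le j$) are indeterminates, and let $p_0,q_0,p_1,q_1$ be further indeterminates. For $s,t$ put $\mathbf V(s,t)=(s^2,st,t^2)^T$, $\mathbf F(s,t)=(\mathcal A\mathbf V(s,t))\times(\mathcal B\mathbf V(s,t))$ (vector cross product) with components $F^{(1)},F^{(2)},F^{(3)}$, and $Q(s,t)=(F^{(2)}(s,t))^2-F^{(1)}(s,t)F^{(3)}(s,t)$. Define polynomials $p_n,q_n$ by $$p_{n+1}=q_{n-1}F^{(1)}(p_n,q_n)-p_{n-1}F^{(2)}(p_n,q_n),\qquad q_{n+1}=q_{n-1}F^{(2)}(p_n,q_n)-p_{n-1}F^{(3)}(p_n,q_n)\qquad(n\ge1),$$ and set $Q_n=Q(p_n,q_n)$. Then for every $n\ge1$, $Q_n$ divides $Q_{n+1}$ in the polynomial ring $\mathbb Z[a_{ij},b_{ij},p_0,q_0,p_1,q_1]$.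
   Context: This recurrence is the homogenisation ($u_n=p_n/q_n$) of the 12-parameter symmetric QRT map $u_{n+1}=\frac{f^{(1)}(u_n)-u_{n-1}f^{(2)}(u_n)}{f^{(2)}(u_n)-u_{n-1}f^{(3)}(u_n)}$ with $\mathbf f(u)=\mathbf F(u,1)$. *)

theory Defs
  imports Main "HOL-Library.Poly_Mapping"
begin

datatype var = a00 | a01 | a02 | a11 | a12 | a22
             | b00 | b01 | b02 | b11 | b12 | b22
             | p0 | q0 | p1 | q1

text \<open>The polynomial ring Z[a_ij, b_ij, p0, q0, p1, q1]: finitely supported maps from
 monomials (finitely supported exponent vectors) to integer coefficients.\<close>
type_synonym mpoly = "(var \<Rightarrow>\<^sub>0 nat) \<Rightarrow>\<^sub>0 int"

definition Var :: "var \<Rightarrow> mpoly" where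
  "Var x = Poly_Mapping.single (Poly_Mapping.single x 1) 1"

fun Amat :: "nat \<Rightarrow> nat \<Rightarrow> mpoly" where
  "Amat i j = (let (k, l) = (min i j, max i j) in
     if (k, l) = (0, 0) then Var a00 else if (k, l) = (0, 1) then Var a01
     else if (k, l) = (0, 2) then Var a02 else if (k, l) = (1, 1) then Var a11
     else if (k, l) = (1, 2) then Var a12 else Var a22)"

fun Bmat :: "nat \<Rightarrow> nat \<Rightarrow> mpoly" where
  "Bmat i j = (let (k, l) = (min i j, max i j) in
     if (k, l) = (0, 0) then Var b00 else if (k, l) = (0, 1) then Var b01
     else if (k, l) = (0, 2) then Var b02 else if (k, l) = (1, 1) then Var b11
     else if (k, l) = (1, 2) then Var b12 else Var b22)"

definition Vvec :: "mpoly \<Rightarrow> mpoly \<Rightarrow> nat \<Rightarrow> mpoly" where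
  "Vvec s t j = (if j = 0 then s^2 else if j = 1 then s * t else t^2)"

definition AV :: "mpoly \<Rightarrow> mpoly \<Rightarrow> nat \<Rightarrow> mpoly" where
  "AV s t i = (\<Sum>j<3. Amat i j * Vvec s t j)"

definition BV :: "mpoly \<Rightarrow> mpoly \<Rightarrow> nat \<Rightarrow> mpoly" where
  "BV s t i = (\<Sum>j<3. Bmat i j * Vvec s t j)"

definition F1 :: "mpoly \<Rightarrow> mpoly \<Rightarrow> mpoly" where
  "F1 s t = AV s t 1 * BV s t 2 - AV s t 2 * BV s t 1"
definition F2 :: "mpoly \<Rightarrow> mpoly \<Rightarrow> mpoly" where
  "F2 s t = AV s t 2 * BV s t 0 - AV s t 0 * BV s t 2"
definition F3 :: "mpoly \<Rightarrow> mpoly \<Rightarrow> mpoly" where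
  "F3 s t = AV s t 0 * BV s t 1 - AV s t 1 * BV s t 0"

definition Qf :: "mpoly \<Rightarrow> mpoly \<Rightarrow> mpoly" where
  "Qf s t = (F2 s t)^2 - F1 s t * F3 s t"

fun pq :: "nat \<Rightarrow> mpoly \<times> mpoly" where
  "pq 0 = (Var p0, Var q0)"
| "pq (Suc 0) = (Var p1, Var q1)"
| "pq (Suc (Suc n)) =
     (let (pm, qm) = pq n; (pn, qn) = pq (Suc n) in
      (qm * F1 pn qn - pm * F2 pn qn, qm * F2 pn qn - pm * F3 pn qn))"

definition Qn :: "nat \<Rightarrow> mpoly" where
  "Qn n = Qf (fst (pq n)) (snd (pq n))"

end

theory Submission
  imports Defs
begin

definition mv :: "(nat \<Rightarrow> nat \<Rightarrow> 'a::comm_ring_1) \<Rightarrow> (nat \<Rightarrow> 'a) \<Rightarrow> nat \<Rightarrow> 'a" where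
  "mv M Y i = M i 0 * Y 0 + M i 1 * Y 1 + M i 2 * Y 2"

definition cross :: "(nat \<Rightarrow> 'a::comm_ring_1) \<Rightarrow> (nat \<Rightarrow> 'a) \<Rightarrow> nat \<Rightarrow> 'a" where
  "cross u v i = (if i = 0 then u 1 * v 2 - u 2 * v 1
     else if i = 1 then u 2 * v 0 - u 0 * v 2 else u 0 * v 1 - u 1 * v 0)"

definition adjmv :: "(nat \<Rightarrow> nat \<Rightarrow> 'a::comm_ring_1) \<Rightarrow> (nat \<Rightarrow> 'a) \<Rightarrow> nat \<Rightarrow> 'a" where
  "adjmv M v i = (if i = 0 then
       (M 1 1 * M 2 2 - M 1 2 * M 2 1) * v 0 + (M 0 2 * M 2 1 - M 0 1 * M 2 2) * v 1
       + (M 0 1 * M 1 2 - M 0 2 * M 1 1) * v 2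
     else if i = 1 then
       (M 1 2 * M 2 0 - M 1 0 * M 2 2) * v 0 + (M 0 0 * M 2 2 - M 0 2 * M 2 0) * v 1
       + (M 0 2 * M 1 0 - M 0 0 * M 1 2) * v 2
     else
       (M 1 0 * M 2 1 - M 1 1 * M 2 0) * v 0 + (M 0 1 * M 2 0 - M 0 0 * M 2 1) * v 1
       + (M 0 0 * M 1 1 - M 0 1 * M 1 0) * v 2)"

definition det3 :: "(nat \<Rightarrow> 'a::comm_ring_1) \<Rightarrow> (nat \<Rightarrow> 'a) \<Rightarrow> (nat \<Rightarrow> 'a) \<Rightarrow> 'a" where
  "det3 u v w = u 0 * (v 1 * w 2 - v 2 * w 1) - u 1 * (v 0 * w 2 - v 2 * w 0)
     + u 2 * (v 0 * w 1 - v 1 * w 0)"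

definition GG :: "(nat \<Rightarrow> nat \<Rightarrow> 'a::comm_ring_1) \<Rightarrow> (nat \<Rightarrow> nat \<Rightarrow> 'a) \<Rightarrow> (nat \<Rightarrow> 'a) \<Rightarrow> nat \<Rightarrow> 'a" where
  "GG A B Y = cross (mv A Y) (mv B Y)"

definition Con :: "(nat \<Rightarrow> 'a::comm_ring_1) \<Rightarrow> 'a" where
  "Con W = (W 1)^2 - W 0 * W 2"

definition Vg :: "'a::comm_ring_1 \<Rightarrow> 'a \<Rightarrow> nat \<Rightarrow> 'a" where
  "Vg s t j = (if j = 0 then s^2 else if j = 1 then s * t else t^2)"

definition symm :: "(nat \<Rightarrow> nat \<Rightarrow> 'a) \<Rightarrow> bool" where
  "symm M \<longleftrightarrow> M 1 0 = M 0 1 \<and> M 2 0 = M 0 2 \<and> M 2 1 = M 1 2"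

lemma i3: "(i::nat) = 0 \<or> i = 1 \<or> i = 2 \<or> i > 2" by auto

lemma mv_cong: "Y 0 = Z 0 \<Longrightarrow> Y 1 = Z 1 \<Longrightarrow> Y 2 = Z 2 \<Longrightarrow> mv M Y = mv M Z"
  by (rule ext) (simp add: mv_def)

lemma Con_cong: "Y 0 = Z 0 \<Longrightarrow> Y 1 = Z 1 \<Longrightarrow> Y 2 = Z 2 \<Longrightarrow> Con Y = Con Z"
  by (simp add: Con_def)

lemma lemA:
  assumes "symm A" "i < 3"
  shows "mv A (cross (mv A Y) v) i = cross Y (adjmv A v) i"
proof -
  have s: "A (Suc 0) 0 = A 0 (Suc 0)" "A 2 0 = A 0 2" "A 2 (Suc 0) = A (Suc 0) 2" using assms(1) by (auto simp: symm_def)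
  have "i = 0 \<or> i = 1 \<or> i = 2" using assms(2) by auto
  then show ?thesis
    by (elim disjE) (simp_all add: mv_def cross_def adjmv_def s algebra_simps)
qed

lemma lemC: assumes "i < 3" shows "cross (cross Y u) (cross Y v) i = det3 Y u v * Y i"
proof -
  have "i = 0 \<or> i = 1 \<or> i = 2" using assms by auto
  then show ?thesis
    by (elim disjE) (simp_all add: cross_def det3_def algebra_simps)
qed


lemma cross_cong: "u 0 = u' 0 \<Longrightarrow> u 1 = u' 1 \<Longrightarrow> u 2 = u' 2 \<Longrightarrow>
  v 0 = v' 0 \<Longrightarrow> v 1 = v' 1 \<Longrightarrow> v 2 = v' 2 \<Longrightarrow> cross u v = cross u' v'"
  by (rule ext) (simp add: cross_def)

lemma cross_anti: "cross u v = (\<lambda>i. - cross v u i)"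
  by (rule ext) (simp add: cross_def)

lemma mv_neg: "mv M (\<lambda>i. - W i) j = - mv M W j"
  by (simp add: mv_def algebra_simps)

lemma cross_neg2: "cross u (\<lambda>i. - w i) i = - cross u w i"
  by (simp add: cross_def algebra_simps)

lemma lemB:
  assumes "symm A" "symm B" "i < 3"
  shows "GG A B (GG A B Y) i = - det3 Y (adjmv A (mv B Y)) (adjmv B (mv A Y)) * Y i"
proof -
  define Z where "Z = GG A B Y"
  define a' where "a' = adjmv A (mv B Y)"
  define b' where "b' = adjmv B (mv A Y)"
  have hA: "mv A Z j = cross Y a' j" if "j < 3" for j
    using lemA[OF assms(1) that] unfolding Z_def GG_def a'_def by simp
  have hB: "mv B Z j = - cross Y b' j" if "j < 3" for j
  proof -
    have "mv B Z j = - mv B (cross (mv B Y) (mv A Y)) j"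
      unfolding Z_def GG_def by (subst cross_anti) (simp add: mv_neg)
    also have "\<dots> = - cross Y b' j" using lemA[OF assms(2) that] unfolding b'_def by simp
    finally show ?thesis .
  qed
  have "GG A B Z = cross (cross Y a') (\<lambda>j. - cross Y b' j)"
    unfolding GG_def by (rule cross_cong) (simp_all add: hA hB)
  then have "GG A B Z i = - cross (cross Y a') (cross Y b') i" by (simp add: cross_neg2)
  also have "\<dots> = - det3 Y a' b' * Y i" using lemC[OF assms(3)] by simp
  finally show ?thesis unfolding Z_def a'_def b'_def .
qed

lemma cross_lin:
  assumes "i < 3"
  shows "cross (\<lambda>j. k * a j + c * b j) (\<lambda>j. k * a' j + c * b' j) i =
    k^2 * cross a a' i + c * (k * (cross a b' i + cross b a' i) + c * cross b b' i)"
proof -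
  have "i = 0 \<or> i = 1 \<or> i = 2" using assms by auto
  then show ?thesis
    by (elim disjE) (simp_all add: cross_def algebra_simps power2_eq_square)
qed

lemma mv_lin: "mv M (\<lambda>j. k * a j + c * b j) = (\<lambda>j. k * mv M a j + c * mv M b j)"
  by (rule ext) (simp add: mv_def algebra_simps)

lemma main:
  fixes A B :: "nat \<Rightarrow> nat \<Rightarrow> 'a::comm_ring_1"
  assumes sA: "symm A" and sB: "symm B"
  shows "Con (GG A B (Vg p q)) dvd Con (GG A B (Vg (qm * GG A B (Vg p q) 0 - pm * GG A B (Vg p q) 1)
            (qm * GG A B (Vg p q) 1 - pm * GG A B (Vg p q) 2)))"
proof -
  define X where "X = Vg p q"
  define f where "f = GG A B X"
  define c where "c = Con f"
  define E where "E = Vg pm qm"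
  define k where "k = qm^2 * f 0 - 2*pm*qm*f 1 + pm^2 * f 2"
  define W where "W = (\<lambda>i. k * f i + c * E i)"
  define H where "H = (\<lambda>i. k * (cross (mv A f) (mv B E) i + cross (mv A E) (mv B f) i) + c * GG A B E i)"
  define \<phi> where "\<phi> = - det3 X (adjmv A (mv B X)) (adjmv B (mv A X))"
  have VW: "Vg (qm*f 0 - pm*f 1) (qm*f 1 - pm*f 2) i = W i" if "i < 3" for i
  proof -
    have "i = 0 \<or> i = 1 \<or> i = 2" using that by auto
    then show ?thesis unfolding W_def k_def c_def Con_def E_def Vg_def
      by (elim disjE) (simp_all add: algebra_simps power2_eq_square)
  qed
  have e1: "GG A B (Vg (qm*f 0 - pm*f 1) (qm*f 1 - pm*f 2)) = GG A B W"
    unfolding GG_def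
    by (rule arg_cong2[where f=cross]; rule mv_cong) (simp_all add: VW[of 0, simplified] VW[of 1, simplified] VW[of 2, simplified])
  have e2: "GG A B W i = k^2 * (\<phi> * X i) + c * H i" if "i < 3" for i
  proof -
    have "GG A B W i = k^2 * GG A B f i + c * H i"
      unfolding GG_def W_def mv_lin H_def by (simp add: cross_lin[OF that])
    also have "GG A B f i = \<phi> * X i"
      unfolding f_def \<phi>_def by (rule lemB[OF sA sB that])
    finally show ?thesis .
  qed
  have e3: "Con (GG A B W) = Con (\<lambda>i. k^2 * (\<phi> * X i) + c * H i)"
    by (rule Con_cong) (simp_all add: e2)
  have e4: "Con (\<lambda>i. k^2 * (\<phi> * X i) + c * H i) =
     c * (2 * (k^2 * (\<phi> * X 1)) * H 1 - k^2 * (\<phi> * X 0) * H 2 - k^2 * (\<phi> * X 2) * H 0 + c * Con H)"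
    unfolding Con_def X_def Vg_def by (simp add: algebra_simps power2_eq_square)
  show ?thesis
    unfolding X_def[symmetric] f_def[symmetric] c_def[symmetric] e1 e3 e4 by simp
qed


lemma symA: "symm Amat" by (simp add: symm_def)
lemma symB: "symm Bmat" by (simp add: symm_def)

lemma sum3: "(\<Sum>j<(3::nat). g j) = g 0 + g 1 + (g 2 :: 'a::comm_monoid_add)"
  by (simp add: numeral_3_eq_3 numeral_2_eq_2 lessThan_Suc add_ac)

lemma VV: "Vvec s t = Vg s t" by (rule ext) (simp add: Vvec_def Vg_def)

lemma AV_mv: "AV s t = mv Amat (Vg s t)"
  by (rule ext) (simp add: AV_def sum3 mv_def VV)
lemma BV_mv: "BV s t = mv Bmat (Vg s t)"
  by (rule ext) (simp add: BV_def sum3 mv_def VV)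

lemma F1G: "F1 s t = GG Amat Bmat (Vg s t) 0"
  by (simp add: F1_def GG_def cross_def AV_mv BV_mv)
lemma F2G: "F2 s t = GG Amat Bmat (Vg s t) 1"
  by (simp add: F2_def GG_def cross_def AV_mv BV_mv)
lemma F3G: "F3 s t = GG Amat Bmat (Vg s t) 2"
  by (simp add: F3_def GG_def cross_def AV_mv BV_mv)

lemma QfG: "Qf s t = Con (GG Amat Bmat (Vg s t))"
  by (simp add: Qf_def Con_def F1G F2G F3G)

theorem theorem7:
  fixes n :: nat
  assumes "n \<ge> 1"
  shows "Qn n dvd Qn (Suc n)"
proof -
  obtain m where m: "n = Suc m" using assms by (cases n) auto
  obtain pm qm where h0: "pq m = (pm, qm)" by (cases "pq m")
  obtain p q where h1: "pq (Suc m) = (p, q)" by (cases "pq (Suc m)")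
  have "Qn (Suc (Suc m)) = Qf (qm * F1 p q - pm * F2 p q) (qm * F2 p q - pm * F3 p q)"
    by (simp add: Qn_def h0 h1)
  also have "\<dots> = Con (GG Amat Bmat (Vg (qm * GG Amat Bmat (Vg p q) 0 - pm * GG Amat Bmat (Vg p q) 1)
            (qm * GG Amat Bmat (Vg p q) 1 - pm * GG Amat Bmat (Vg p q) 2)))"
    by (simp only: QfG F1G F2G F3G)
  finally have e: "Qn (Suc (Suc m)) = \<dots>" .
  have "Qn (Suc m) = Con (GG Amat Bmat (Vg p q))" by (simp add: Qn_def h1 QfG)
  then show ?thesis unfolding m e using main[OF symA symB] by simp
qed

end
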